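(* Let $G$ and $H$ be nontrivial finite groups. The cyclic graph $\Delta(G\times H)$ is disconnected if and only if there is a prime $p$ and an element $x\in G\times H$ of order $p$ whose centralizer $C_{G\times H}(x)$ is a $p$-group.
   Context: For a finite group $X$, the cyclic graph $\Delta(X)$ has vertex set $X^{\#}=X\setminus\{1\}$, and distinct vertices $x,y$ are adjacent if and only if the subgroup $\langle x,y\rangle$ is cyclic. *)

theory Defs
  imports "HOL-Algebra.Algebra"
begin

definition cyc_vertices :: "('a, 'b) monoid_scheme \<Rightarrow> 'a set" where
  "cyc_vertices M = carrier M - {one M}"

definition cyc_adj :: "('a, 'b) monoid_scheme \<Rightarrow> 'a \<Rightarrow> 'a \<Rightarrow> bool" where
  "cyc_adj M x y \<longleftrightarrow> x \<in> cyc_vertices M \<and> y \<in> cyc_vertices M \<and> x \<noteq> y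
     \<and> cyclic_group (subgroup_generated M {x, y})"

definition cyc_graph_connected :: "('a, 'b) monoid_scheme \<Rightarrow> bool" where
  "cyc_graph_connected M \<longleftrightarrow>
     (\<forall>x \<in> cyc_vertices M. \<forall>y \<in> cyc_vertices M. (cyc_adj M)\<^sup>*\<^sup>* x y)"

definition centralizer_of :: "('a, 'b) monoid_scheme \<Rightarrow> 'a \<Rightarrow> 'a set" where
  "centralizer_of M x = {y \<in> carrier M. y \<otimes>\<^bsub>M\<^esub> x = x \<otimes>\<^bsub>M\<^esub> y}"

definition is_p_group :: "nat \<Rightarrow> 'a set \<Rightarrow> bool" where
  "is_p_group p S \<longleftrightarrow> finite S \<and> (\<exists>k::nat. card S = p ^ k)"

end

theory Submission
  imports Defs
begin

lemma (in group) cyc_iff: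
  assumes "a \<in> carrier G" "b \<in> carrier G"
  shows "cyclic_group (subgroup_generated G {a,b}) \<longleftrightarrow> (\<exists>c\<in>carrier G. generate G {a,b} = generate G {c})"
proof -
  let ?S = "subgroup_generated G {a,b}"
  have cS: "carrier ?S = generate G {a,b}"
    using assms by (simp add: carrier_subgroup_generated Int_absorb1)
  have grp: "group ?S" by (rule group_subgroup_generated)
  have sub: "carrier ?S \<subseteq> carrier G" using cS generate_incl assms by auto
  have pw: "\<And>c. c \<in> carrier ?S \<Longrightarrow> range (\<lambda>n::int. c [^]\<^bsub>?S\<^esub> n) = range (\<lambda>n::int. c [^] n)"
    using int_pow_subgroup_generated by auto
  have gp: "\<And>c. c \<in> carrier G \<Longrightarrow> generate G {c} = range (\<lambda>n::int. c [^] n)"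
    using generate_pow by auto
  show ?thesis
  proof
    assume "cyclic_group ?S"
    then obtain c where c: "c \<in> carrier ?S" "carrier ?S = range (\<lambda>n::int. c [^]\<^bsub>?S\<^esub> n)"
      using group.cyclic_group[OF grp] by blast
    have cG: "c \<in> carrier G" using sub c(1) by auto
    have "generate G {a,b} = generate G {c}" using cS c(2) pw[OF c(1)] gp[OF cG] by simp
    then show "\<exists>c\<in>carrier G. generate G {a,b} = generate G {c}" using cG by blast
  next
    assume "\<exists>c\<in>carrier G. generate G {a,b} = generate G {c}"
    then obtain c where c: "c \<in> carrier G" "generate G {a,b} = generate G {c}" by blast
    have cc: "c \<in> carrier ?S" using cS c generate.incl[of c "{c}" G] by auto
    have "carrier ?S = range (\<lambda>n::int. c [^]\<^bsub>?S\<^esub> n)" using pw[OF cc] gp[OF c(1)] cS c(2) by simp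
    then show "cyclic_group ?S"
      using group.cyclic_group[OF grp] cc by blast
  qed
qed

lemma (in group) adj_sym: "cyc_adj G x y \<Longrightarrow> cyc_adj G y x"
  unfolding cyc_adj_def by (auto simp: insert_commute)

lemma rtranclp_sym_gen:
  assumes "\<And>a b. r a b \<Longrightarrow> r b a" "r\<^sup>*\<^sup>* x y" shows "r\<^sup>*\<^sup>* y x"
  using assms(2) by (induction rule: rtranclp_induct) (auto intro: converse_rtranclp_into_rtranclp assms(1))

lemma (in group) adj_pow:
  assumes "v \<in> cyc_vertices G" "w \<in> cyc_vertices G" "v \<noteq> w" "w \<in> generate G {v}"
  shows "cyc_adj G v w"
proof -
  have v: "v \<in> carrier G" "w \<in> carrier G" using assms unfolding cyc_vertices_def by auto
  have "generate G {v,w} = generate G {v}"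
  proof
    show "generate G {v,w} \<subseteq> generate G {v}"
      by (rule generate_subgroup_incl) (use assms v generate.incl[of v "{v}" G] generate_is_subgroup in auto)
    show "generate G {v} \<subseteq> generate G {v,w}" by (rule mono_generate) auto
  qed
  then show ?thesis using assms v cyc_iff unfolding cyc_adj_def by blast
qed

lemma (in group) adj_coprime:
  assumes x: "x \<in> carrier G" and z: "z \<in> carrier G" and c: "x \<otimes> z = z \<otimes> x"
    and cop: "coprime (ord x) (ord z)" and "x \<noteq> \<one>" "z \<noteq> \<one>"
  shows "cyc_adj G x z"
proof -
  have "x \<noteq> z"
  proof
    assume "x = z"
    then have "ord x = 1" using cop by simp
    then show False using assms ord_eq_1 by auto
  qed
  obtain u v :: int where uv: "u * int (ord x) + v * int (ord z) = 1"
  proof -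
    have "gcd (int (ord x)) (int (ord z)) = 1" using cop by (simp add: coprime_iff_gcd_eq_1)
    then show ?thesis using that bezout_int[of "int (ord x)" "int (ord z)"] by auto
  qed
  have xz: "x \<otimes> z \<in> carrier G" using x z by simp
  have e1: "(x \<otimes> z) [^] (v * int (ord z)) = x"
  proof -
    have "(x \<otimes> z) [^] (v * int (ord z)) = x [^] (v * int (ord z)) \<otimes> z [^] (v * int (ord z))"
      using int_pow_mult_distrib[OF c x z] .
    moreover have "z [^] (v * int (ord z)) = \<one>" using int_pow_eq_id[OF z] by simp
    moreover have "x [^] (v * int (ord z)) = x [^] (1::int)"
      using int_pow_eq[OF x] uv by (metis add_diff_cancel_right' dvd_mult2 dvd_refl mult.commute)
    ultimately show ?thesis using x by simp
  qed
  have e2: "(x \<otimes> z) [^] (u * int (ord x)) = z"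
  proof -
    have "(x \<otimes> z) [^] (u * int (ord x)) = x [^] (u * int (ord x)) \<otimes> z [^] (u * int (ord x))"
      using int_pow_mult_distrib[OF c x z] .
    moreover have "x [^] (u * int (ord x)) = \<one>" using int_pow_eq_id[OF x] by simp
    moreover have "z [^] (u * int (ord x)) = z [^] (1::int)"
      using int_pow_eq[OF z] uv by (metis add_diff_cancel_left' dvd_mult2 dvd_refl mult.commute)
    ultimately show ?thesis using z by simp
  qed
  have "generate G {x,z} = generate G {x \<otimes> z}"
  proof
    show "generate G {x,z} \<subseteq> generate G {x \<otimes> z}"
    proof (rule generate_subgroup_incl)
      have "x \<in> generate G {x \<otimes> z}" "z \<in> generate G {x \<otimes> z}"
        using generate_pow[OF xz] e1[symmetric] e2[symmetric] by blast+
      then show "{x, z} \<subseteq> generate G {x \<otimes> z}" by auto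
      show "subgroup (generate G {x \<otimes> z}) G" using generate_is_subgroup xz by auto
    qed
    show "generate G {x \<otimes> z} \<subseteq> generate G {x,z}"
      apply (rule generate_subgroup_incl)
      using generate_is_subgroup x z generate.eng[OF generate.incl[of x "{x,z}"] generate.incl[of z "{x,z}"]]
      by auto
  qed
  then show ?thesis using assms \<open>x \<noteq> z\<close> cyc_iff xz unfolding cyc_adj_def cyc_vertices_def by blast
qed

lemma (in group) prime_power_elem:
  assumes fin: "finite (carrier G)" and v: "v \<in> carrier G" "v \<noteq> \<one>"
  shows "\<exists>x. x \<in> carrier G \<and> Factorial_Ring.prime (ord x) \<and> (cyc_adj G)\<^sup>*\<^sup>* v x"
proof -
  define n where "n = ord v"
  have n1: "n \<noteq> 1" using ord_eq_1 v n_def by auto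
  have n0: "n \<noteq> 0" using ord_ge_1[OF fin v(1)] n_def by auto
  obtain p where p: "Factorial_Ring.prime p" "p dvd n" using prime_factor_nat[OF n1] by blast
  define k where "k = n div p"
  have nk: "n = p * k" using p(2) by (simp add: k_def)
  have kd: "k dvd n" "k \<noteq> 0" using nk n0 by auto
  define x where "x = v [^] k"
  have ox: "ord x = p" using ord_pow[OF v(1) _ kd(2)] kd nk n_def x_def by simp
  have xc: "x \<in> carrier G" using x_def v by simp
  have xne: "x \<noteq> \<one>" using ox p ord_eq_1[OF xc] by auto
  have xg: "x \<in> generate G {v}" using generate_pow[OF v(1)] x_def
    by (auto intro!: exI[of _ "int k"] simp: int_pow_int)
  have "(cyc_adj G)\<^sup>*\<^sup>* v x"
  proof (cases "x = v")
    case False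
    then have "cyc_adj G v x" using adj_pow[of v x] xg xc xne v unfolding cyc_vertices_def by auto
    then show ?thesis by auto
  qed auto
  then show ?thesis using xc ox p by auto
qed

lemma (in group) ord_dvd_subgroup_card:
  assumes fin: "finite (carrier G)" and K: "subgroup K G" and c: "c \<in> K"
  shows "ord c dvd card K"
proof -
  interpret KG: group "G\<lparr>carrier := K\<rparr>" using subgroup_imp_group[OF K] .
  have "c [^]\<^bsub>G\<lparr>carrier := K\<rparr>\<^esub> order (G\<lparr>carrier := K\<rparr>) = \<one>\<^bsub>G\<lparr>carrier := K\<rparr>\<^esub>"
    using KG.pow_order_eq_1 c by simp
  then have "c [^] card K = \<one>" by (simp add: order_def nat_pow_def)
  then show ?thesis using pow_eq_id c K subgroup.subset by blast
qed

lemma (in group) cauchy_sub: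
  assumes fin: "finite (carrier G)" and K: "subgroup K G" and r: "Factorial_Ring.prime r" "r dvd card K"
  shows "\<exists>y\<in>K. ord y = r"
proof -
  interpret KG: group "G\<lparr>carrier := K\<rparr>" using subgroup_imp_group[OF K] .
  have finK: "finite K" using fin K subgroup.subset finite_subset by blast
  obtain m where m: "card K = r ^ 1 * m" using r by auto
  obtain Q where Q: "subgroup Q (G\<lparr>carrier := K\<rparr>)" "card Q = r ^ 1"
    using sylow_thm[OF r(1) KG.is_group, of 1 m] m finK by (auto simp: order_def)
  interpret QG: group "G\<lparr>carrier := K\<rparr>\<lparr>carrier := Q\<rparr>" using KG.subgroup_imp_group[OF Q(1)] .
  have QK: "Q \<subseteq> K" using subgroup.subset[OF Q(1)] by simp
  have "card Q \<ge> 2" using Q r prime_ge_2_nat by auto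
  then obtain y where y: "y \<in> Q" "y \<noteq> \<one>"
  proof -
    have "Q - {\<one>} \<noteq> {}"
    proof
      assume "Q - {\<one>} = {}"
      then have "Q \<subseteq> {\<one>}" by auto
      then have "card Q \<le> card {\<one>}" by (intro card_mono) auto
      then have "card Q \<le> 1" by simp
      then show False using \<open>card Q \<ge> 2\<close> by auto
    qed
    then show ?thesis using that by auto
  qed
  have yc: "y \<in> carrier G" using y QK K subgroup.subset by blast
  have "y [^]\<^bsub>G\<lparr>carrier := K\<rparr>\<lparr>carrier := Q\<rparr>\<^esub> order (G\<lparr>carrier := K\<rparr>\<lparr>carrier := Q\<rparr>) = \<one>\<^bsub>G\<lparr>carrier := K\<rparr>\<lparr>carrier := Q\<rparr>\<^esub>"
    using QG.pow_order_eq_1 y by simp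
  then have "y [^] r = \<one>" using Q by (simp add: order_def nat_pow_def)
  then have "ord y dvd r" using pow_eq_id yc by blast
  moreover have "ord y \<noteq> 1" using ord_eq_1 yc y by auto
  ultimately have "ord y = r" using r(1) unfolding prime_nat_iff by blast
  then show ?thesis using y QK by auto
qed

lemma nat_only_prime_factor:
  assumes "Factorial_Ring.prime (p::nat)" "n > 0" "\<And>q. Factorial_Ring.prime q \<Longrightarrow> q dvd n \<Longrightarrow> q = p"
  shows "\<exists>k. n = p ^ k"
  using assms(2,3)
proof (induction n rule: less_induct)
  case (less n)
  show ?case
  proof (cases "n = 1")
    case True then show ?thesis by (auto intro: exI[of _ 0])
  next
    case False
    then obtain q where q: "Factorial_Ring.prime q" "q dvd n" using prime_factor_nat by blast
    then have qp: "q = p" using less by auto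
    then obtain m where m: "n = p * m" using q by auto
    have "m < n" "m > 0" using m less(2) assms(1) prime_gt_1_nat by auto
    moreover have "\<And>q. Factorial_Ring.prime q \<Longrightarrow> q dvd m \<Longrightarrow> q = p" using less(3) m by auto
    ultimately obtain k where "m = p ^ k" using less(1) by blast
    then show ?thesis using m by (auto intro: exI[of _ "Suc k"])
  qed
qed

lemma (in group) not_p_group_elem:
  assumes fin: "finite (carrier G)" and K: "subgroup K G" and p: "Factorial_Ring.prime p"
    and np: "\<not> is_p_group p K"
  shows "\<exists>y\<in>K. Factorial_Ring.prime (ord y) \<and> ord y \<noteq> p"
proof -
  have finK: "finite K" using fin K subgroup.subset finite_subset by blast
  have "card K > 0" using finK subgroup.one_closed[OF K] card_gt_0_iff by blast
  have "\<not> (\<forall>q. Factorial_Ring.prime q \<longrightarrow> q dvd card K \<longrightarrow> q = p)"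
  proof
    assume "\<forall>q. Factorial_Ring.prime q \<longrightarrow> q dvd card K \<longrightarrow> q = p"
    then obtain k where "card K = p ^ k" using nat_only_prime_factor[OF p \<open>card K > 0\<close>] by blast
    then show False using np finK unfolding is_p_group_def by blast
  qed
  then obtain r where r: "Factorial_Ring.prime r" "r dvd card K" "r \<noteq> p" by blast
  then show ?thesis using cauchy_sub[OF fin K r(1,2)] by auto
qed

lemma (in group) centralizer_subgroup:
  assumes x: "x \<in> carrier G"
  shows "subgroup (centralizer_of G x) G"
proof (rule subgroupI)
  show "centralizer_of G x \<subseteq> carrier G" unfolding centralizer_of_def by auto
  show "centralizer_of G x \<noteq> {}" using x unfolding centralizer_of_def by auto
  fix a assume a: "a \<in> centralizer_of G x"
  then have ac: "a \<in> carrier G" "a \<otimes> x = x \<otimes> a" unfolding centralizer_of_def by auto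
  have ia: "inv a \<in> carrier G" using ac by simp
  have iax: "inv a \<otimes> (a \<otimes> x) = x" using ac(1) x by (simp add: m_assoc[symmetric])
  have "inv a \<otimes> x = inv a \<otimes> x \<otimes> (a \<otimes> inv a)" using ac ia x by simp
  also have "\<dots> = inv a \<otimes> (x \<otimes> a) \<otimes> inv a" using ac ia x by (simp add: m_assoc)
  also have "\<dots> = inv a \<otimes> (a \<otimes> x) \<otimes> inv a" using ac by simp
  also have "\<dots> = x \<otimes> inv a" using iax by simp
  finally have "inv a \<otimes> x = x \<otimes> inv a" .
  then show "inv a \<in> centralizer_of G x" using ac unfolding centralizer_of_def by auto
  fix b assume "b \<in> centralizer_of G x"
  then have bc: "b \<in> carrier G" "b \<otimes> x = x \<otimes> b" unfolding centralizer_of_def by auto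
  have "a \<otimes> b \<otimes> x = a \<otimes> (b \<otimes> x)" using ac(1) bc(1) x by (simp add: m_assoc)
  also have "\<dots> = a \<otimes> (x \<otimes> b)" using bc(2) by simp
  also have "\<dots> = (a \<otimes> x) \<otimes> b" using ac(1) bc(1) x by (simp add: m_assoc)
  also have "\<dots> = (x \<otimes> a) \<otimes> b" using ac(2) by simp
  also have "\<dots> = x \<otimes> (a \<otimes> b)" using ac(1) bc(1) x by (simp add: m_assoc)
  finally have "a \<otimes> b \<otimes> x = x \<otimes> (a \<otimes> b)" .
  then show "a \<otimes> b \<in> centralizer_of G x" using ac bc unfolding centralizer_of_def by auto
qed

lemma (in group) cyc_p_unique:
  assumes c: "c \<in> carrier G" and oc: "ord c = p ^ m" and p: "Factorial_Ring.prime p"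
    and x: "x \<in> generate G {c}" "ord x = p" and z: "z \<in> generate G {c}" "z \<noteq> \<one>"
  shows "x \<in> generate G {z}"
proof -
  define n where "n = ord c"
  have n0: "n \<noteq> 0" using oc p n_def by (simp add: prime_gt_0_nat)
  have gn: "generate G {c} = {c [^] k | k. k \<in> (UNIV :: nat set)}"
    using generate_pow_nat[OF c] n0 n_def by auto
  obtain a :: nat where a: "x = c [^] a" using x gn by auto
  obtain b :: nat where b: "z = c [^] b" using z gn by auto
  have zc: "z \<in> carrier G" using b c by simp
  have m1: "m \<noteq> 0"
  proof
    assume "m = 0"
    then have "c = \<one>" using oc ord_eq_1[OF c] by simp
    then have "x = \<one>" using a by simp
    then show False using x(2) p by (metis ord_id not_prime_1)
  qed
  have xc: "x \<in> carrier G" using a c by simp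
  have "x [^] p = \<one>" using pow_ord_eq_1[OF xc] x(2) by simp
  then have "(c [^] a) [^] p = \<one>" using a by simp
  then have "c [^] (a * p) = \<one>" using c by (simp add: nat_pow_pow)
  then have "n dvd a * p" using pow_eq_id[OF c] n_def by simp
  then have "p ^ (m - 1) * p dvd a * p" using oc n_def m1
    by (metis power_minus_mult not_gr_zero)
  then have pa: "p ^ (m - 1) dvd a" using p by (metis dvd_mult_cancel_right prime_gt_0_nat not_gr_zero mult_is_0 mult.commute nat_mult_dvd_cancel_disj)
  have nb: "\<not> n dvd b" using z(2) b pow_eq_id[OF c] n_def by simp
  then have b0: "b \<noteq> 0" by (metis dvd_0_right)
  obtain e where e: "e \<le> m" "gcd b n = p ^ e"
    using divides_primepow_nat[OF p, of "gcd b n" m] oc n_def by auto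
  have "e \<noteq> m" using e nb oc n_def by (metis gcd_dvd1)
  then have "gcd b n dvd p ^ (m - 1)" using e by (simp add: le_imp_power_dvd)
  then have "gcd b n dvd a" using pa dvd_trans by blast
  then obtain k where k: "a = gcd b n * k" by blast
  obtain s t where st: "b * s = n * t + gcd b n" using bezout_nat[OF b0, of n] by blast
  have "b * (s * k) = (n * t + gcd b n) * k" using st by (metis mult.assoc)
  then have "b * (s * k) = n * (t * k) + a" using k by (simp add: algebra_simps)
  then have "z [^] (s * k) = c [^] (n * (t * k)) \<otimes> c [^] a"
    using b c by (simp add: nat_pow_pow nat_pow_mult)
  also have "c [^] (n * (t * k)) = \<one>" using c n_def by (simp add: nat_pow_pow[symmetric])
  finally have "z [^] (s * k) = x" using a c by simp
  then have "z [^] int (s * k) = x" by (simp only: int_pow_int)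
  then show ?thesis using generate_pow[OF zc] by blast
qed

lemma (in group) generate_single_comm:
  assumes c: "c \<in> carrier G" and "u \<in> generate G {c}" "w \<in> generate G {c}"
  shows "u \<otimes> w = w \<otimes> u"
proof -
  obtain i j :: int where ij: "u = c [^] i" "w = c [^] j" using assms generate_pow[OF c] by auto
  have "c [^] i \<otimes> c [^] j = c [^] (i + j)" using c by (simp add: int_pow_mult)
  also have "\<dots> = c [^] (j + i)" by (simp add: add.commute)
  also have "\<dots> = c [^] j \<otimes> c [^] i" using c by (simp add: int_pow_mult)
  finally show ?thesis using ij by simp
qed

lemma (in group) component_in_S:
  assumes fin: "finite (carrier G)" and x: "x \<in> carrier G" "ord x = p" and p: "Factorial_Ring.prime p"
    and pg: "is_p_group p (centralizer_of G x)" and r: "(cyc_adj G)\<^sup>*\<^sup>* x z"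
  shows "z \<in> centralizer_of G x \<and> x \<in> generate G {z}"
  using r
proof (induction rule: rtranclp_induct)
  case base
  then show ?case using x generate.incl[of x "{x}" G] unfolding centralizer_of_def by auto
next
  case (step y z)
  have yz: "y \<in> carrier G" "z \<in> carrier G" "z \<noteq> \<one>" using step(2) unfolding cyc_adj_def cyc_vertices_def by auto
  obtain c where c: "c \<in> carrier G" "generate G {y,z} = generate G {c}"
    using step(2) cyc_iff[OF yz(1,2)] unfolding cyc_adj_def by blast
  have "generate G {y} \<subseteq> generate G {y,z}" by (rule mono_generate) auto
  then have xc: "x \<in> generate G {c}" using step(3) c by auto
  have zc: "z \<in> generate G {c}" using c generate.incl[of z "{y,z}" G] by auto
  have cc: "c \<in> generate G {c}" using generate.incl[of c "{c}" G] by auto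
  have "z \<otimes> x = x \<otimes> z" using generate_single_comm[OF c(1) zc xc] .
  then have zC: "z \<in> centralizer_of G x" using yz unfolding centralizer_of_def by auto
  have "c \<otimes> x = x \<otimes> c" using generate_single_comm[OF c(1) cc xc] .
  then have cC: "c \<in> centralizer_of G x" using c unfolding centralizer_of_def by auto
  obtain k where k: "card (centralizer_of G x) = p ^ k" using pg unfolding is_p_group_def by auto
  have "ord c dvd p ^ k" using ord_dvd_subgroup_card[OF fin centralizer_subgroup[OF x(1)] cC] k by simp
  then obtain m where "ord c = p ^ m" using divides_primepow_nat[OF p] by auto
  then have "x \<in> generate G {z}" using cyc_p_unique[OF c(1) _ p xc x(2) zc yz(3)] by simp
  then show ?case using zC by simp
qed

lemma pow_DirProd: "(a, b) [^]\<^bsub>G \<times>\<times> H\<^esub> (n::nat) = (a [^]\<^bsub>G\<^esub> n, b [^]\<^bsub>H\<^esub> n)"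
  by (induction n) auto

lemma ord_DirProd_left:
  assumes "group G" "group H" "a \<in> carrier G"
  shows "group.ord (G \<times>\<times> H) (a, \<one>\<^bsub>H\<^esub>) = group.ord G a"
proof -
  interpret G: group G by fact
  interpret H: group H by fact
  interpret M: group "G \<times>\<times> H" using DirProd_group assms by blast
  show ?thesis
    using M.ord_unique[of "(a, \<one>\<^bsub>H\<^esub>)"] assms(3) G.pow_eq_id[OF assms(3)]
    by (simp add: pow_DirProd)
qed

lemma ord_DirProd_right:
  assumes "group G" "group H" "b \<in> carrier H"
  shows "group.ord (G \<times>\<times> H) (\<one>\<^bsub>G\<^esub>, b) = group.ord H b"
proof -
  interpret G: group G by fact
  interpret H: group H by fact
  interpret M: group "G \<times>\<times> H" using DirProd_group assms by blast
  show ?thesis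
    using M.ord_unique[of "(\<one>\<^bsub>G\<^esub>, b)"] assms(3) H.pow_eq_id[OF assms(3)]
    by (simp add: pow_DirProd)
qed

lemma ord_DirProd_same:
  assumes "group G" "group H" "a \<in> carrier G" "b \<in> carrier H" "group.ord G a = p" "group.ord H b = p"
  shows "group.ord (G \<times>\<times> H) (a, b) = p"
proof -
  interpret G: group G by fact
  interpret H: group H by fact
  interpret M: group "G \<times>\<times> H" using DirProd_group assms by blast
  show ?thesis
    using M.ord_unique[of "(a, b)"] assms(3,4) G.pow_eq_id[OF assms(3)] H.pow_eq_id[OF assms(4)] assms(5,6)
    by (simp add: pow_DirProd)
qed

theorem theorem4p4:
  fixes G :: "('a, 'c) monoid_scheme" and H :: "('b, 'd) monoid_scheme"
  assumes "group G" and "group H"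
    and "finite (carrier G)" and "finite (carrier H)"
    and "carrier G \<noteq> {\<one>\<^bsub>G\<^esub>}" and "carrier H \<noteq> {\<one>\<^bsub>H\<^esub>}"
  shows "\<not> cyc_graph_connected (G \<times>\<times> H) \<longleftrightarrow>
    (\<exists>p x. Factorial_Ring.prime (p::nat) \<and> x \<in> carrier (G \<times>\<times> H) \<and> group.ord (G \<times>\<times> H) x = p
       \<and> is_p_group p (centralizer_of (G \<times>\<times> H) x))"
proof -
  interpret G: group G by fact
  interpret H: group H by fact
  interpret M: group "G \<times>\<times> H" using DirProd_group assms by blast
  have finM: "finite (carrier (G \<times>\<times> H))" using assms(3,4) by simp
  obtain g1 where g1: "g1 \<in> carrier G" "g1 \<noteq> \<one>\<^bsub>G\<^esub>" using assms(5) G.one_closed by blast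
  obtain h1 where h1: "h1 \<in> carrier H" "h1 \<noteq> \<one>\<^bsub>H\<^esub>" using assms(6) H.one_closed by blast
  let ?R = "(cyc_adj (G \<times>\<times> H))\<^sup>*\<^sup>*"
  have Rsym: "\<And>u v. ?R u v \<Longrightarrow> ?R v u" using rtranclp_sym_gen M.adj_sym by metis
  show ?thesis
  proof
    show "\<exists>p x. Factorial_Ring.prime (p::nat) \<and> x \<in> carrier (G \<times>\<times> H) \<and> group.ord (G \<times>\<times> H) x = p
       \<and> is_p_group p (centralizer_of (G \<times>\<times> H) x)" if nc: "\<not> cyc_graph_connected (G \<times>\<times> H)"
    proof (rule ccontr)
      assume "\<not> ?thesis"
      then have hyp: "\<And>p x. Factorial_Ring.prime (p::nat) \<Longrightarrow> x \<in> carrier (G \<times>\<times> H) \<Longrightarrow> M.ord x = p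
         \<Longrightarrow> \<not> is_p_group p (centralizer_of (G \<times>\<times> H) x)" by blast
      have N1: "\<exists>r. Factorial_Ring.prime r \<and> r \<noteq> p \<and>
          ((\<exists>c\<in>carrier G. c \<noteq> \<one>\<^bsub>G\<^esub> \<and> G.ord c = r \<and> c \<otimes>\<^bsub>G\<^esub> fst x = fst x \<otimes>\<^bsub>G\<^esub> c)
         \<or> (\<exists>d\<in>carrier H. d \<noteq> \<one>\<^bsub>H\<^esub> \<and> H.ord d = r \<and> d \<otimes>\<^bsub>H\<^esub> snd x = snd x \<otimes>\<^bsub>H\<^esub> d))"
        if x: "x \<in> carrier (G \<times>\<times> H)" "M.ord x = p" "Factorial_Ring.prime p" for x p
      proof -
        obtain y where y: "y \<in> centralizer_of (G \<times>\<times> H) x" "Factorial_Ring.prime (M.ord y)" "M.ord y \<noteq> p"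
          using M.not_p_group_elem[OF finM M.centralizer_subgroup[OF x(1)] x(3) hyp[OF x(3,1,2)]] by blast
        obtain c d where cd: "y = (c, d)" by (cases y)
        obtain g h where gh: "x = (g, h)" by (cases x)
        have cdc: "c \<in> carrier G" "d \<in> carrier H" "c \<otimes>\<^bsub>G\<^esub> g = g \<otimes>\<^bsub>G\<^esub> c" "d \<otimes>\<^bsub>H\<^esub> h = h \<otimes>\<^bsub>H\<^esub> d"
          using y(1) unfolding cd gh centralizer_of_def by auto
        define r where "r = M.ord y"
        have "y [^]\<^bsub>G \<times>\<times> H\<^esub> r = \<one>\<^bsub>G \<times>\<times> H\<^esub>" using M.pow_ord_eq_1 y(1) cdc cd r_def by simp
        then have cr: "c [^]\<^bsub>G\<^esub> r = \<one>\<^bsub>G\<^esub>" "d [^]\<^bsub>H\<^esub> r = \<one>\<^bsub>H\<^esub>" using cd by (auto simp: pow_DirProd)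
        have "y \<noteq> \<one>\<^bsub>G \<times>\<times> H\<^esub>" using y(2) by (metis M.ord_id not_prime_1)
        then have "c \<noteq> \<one>\<^bsub>G\<^esub> \<or> d \<noteq> \<one>\<^bsub>H\<^esub>" using cd by auto
        then show ?thesis
        proof
          assume c1: "c \<noteq> \<one>\<^bsub>G\<^esub>"
          have "G.ord c dvd r" using cr G.pow_eq_id cdc by blast
          moreover have "G.ord c \<noteq> 1" using G.ord_eq_1 cdc c1 by auto
          ultimately have "G.ord c = r" using y(2) r_def unfolding prime_nat_iff by blast
          then show ?thesis using c1 cdc gh y r_def by auto
        next
          assume d1: "d \<noteq> \<one>\<^bsub>H\<^esub>"
          have "H.ord d dvd r" using cr H.pow_eq_id cdc by blast
          moreover have "H.ord d \<noteq> 1" using H.ord_eq_1 cdc d1 by auto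
          ultimately have "H.ord d = r" using y(2) r_def unfolding prime_nat_iff by blast
          then show ?thesis using d1 cdc gh y r_def by auto
        qed
      qed
      have adjGH: "cyc_adj (G \<times>\<times> H) (a, \<one>\<^bsub>H\<^esub>) (\<one>\<^bsub>G\<^esub>, b)"
        if "a \<in> carrier G" "b \<in> carrier H" "Factorial_Ring.prime (G.ord a)" "Factorial_Ring.prime (H.ord b)"
           "G.ord a \<noteq> H.ord b" for a b
      proof (rule M.adj_coprime)
        show "coprime (M.ord (a, \<one>\<^bsub>H\<^esub>)) (M.ord (\<one>\<^bsub>G\<^esub>, b))"
          using that ord_DirProd_left[OF assms(1,2)] ord_DirProd_right[OF assms(1,2)] primes_coprime by auto
        show "(a, \<one>\<^bsub>H\<^esub>) \<noteq> \<one>\<^bsub>G \<times>\<times> H\<^esub>" using that by (auto simp: not_prime_1)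
        show "(\<one>\<^bsub>G\<^esub>, b) \<noteq> \<one>\<^bsub>G \<times>\<times> H\<^esub>" using that by (auto simp: not_prime_1)
      qed (use that in auto)
      have adjGG: "cyc_adj (G \<times>\<times> H) (a, \<one>\<^bsub>H\<^esub>) (c, \<one>\<^bsub>H\<^esub>)"
        if "a \<in> carrier G" "c \<in> carrier G" "Factorial_Ring.prime (G.ord a)" "Factorial_Ring.prime (G.ord c)"
           "G.ord a \<noteq> G.ord c" "a \<otimes>\<^bsub>G\<^esub> c = c \<otimes>\<^bsub>G\<^esub> a" for a c
      proof (rule M.adj_coprime)
        show "coprime (M.ord (a, \<one>\<^bsub>H\<^esub>)) (M.ord (c, \<one>\<^bsub>H\<^esub>))"
          using that ord_DirProd_left[OF assms(1,2)] primes_coprime by auto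
        show "(a, \<one>\<^bsub>H\<^esub>) \<noteq> \<one>\<^bsub>G \<times>\<times> H\<^esub>" using that by (auto simp: not_prime_1)
        show "(c, \<one>\<^bsub>H\<^esub>) \<noteq> \<one>\<^bsub>G \<times>\<times> H\<^esub>" using that by (auto simp: not_prime_1)
      qed (use that in auto)
      have adjHH: "cyc_adj (G \<times>\<times> H) (\<one>\<^bsub>G\<^esub>, b) (\<one>\<^bsub>G\<^esub>, d)"
        if "b \<in> carrier H" "d \<in> carrier H" "Factorial_Ring.prime (H.ord b)" "Factorial_Ring.prime (H.ord d)"
           "H.ord b \<noteq> H.ord d" "b \<otimes>\<^bsub>H\<^esub> d = d \<otimes>\<^bsub>H\<^esub> b" for b d
      proof (rule M.adj_coprime)
        show "coprime (M.ord (\<one>\<^bsub>G\<^esub>, b)) (M.ord (\<one>\<^bsub>G\<^esub>, d))"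
          using that ord_DirProd_right[OF assms(1,2)] primes_coprime by auto
        show "(\<one>\<^bsub>G\<^esub>, b) \<noteq> \<one>\<^bsub>G \<times>\<times> H\<^esub>" using that by (auto simp: not_prime_1)
        show "(\<one>\<^bsub>G\<^esub>, d) \<noteq> \<one>\<^bsub>G \<times>\<times> H\<^esub>" using that by (auto simp: not_prime_1)
      qed (use that in auto)
      have K: "?R (a, \<one>\<^bsub>H\<^esub>) (\<one>\<^bsub>G\<^esub>, b)"
        if ab: "a \<in> carrier G" "b \<in> carrier H" "Factorial_Ring.prime (G.ord a)" "Factorial_Ring.prime (H.ord b)" for a b
      proof (cases "G.ord a = H.ord b")
        case False
        then show ?thesis using adjGH[OF ab] by auto
      next
        case True
        define p where "p = G.ord a"
        have xo: "M.ord (a, b) = p" using ord_DirProd_same[OF assms(1,2) ab(1,2)] True p_def by simp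
        obtain r where r: "Factorial_Ring.prime r" "r \<noteq> p"
          "(\<exists>c\<in>carrier G. c \<noteq> \<one>\<^bsub>G\<^esub> \<and> G.ord c = r \<and> c \<otimes>\<^bsub>G\<^esub> a = a \<otimes>\<^bsub>G\<^esub> c)
         \<or> (\<exists>d\<in>carrier H. d \<noteq> \<one>\<^bsub>H\<^esub> \<and> H.ord d = r \<and> d \<otimes>\<^bsub>H\<^esub> b = b \<otimes>\<^bsub>H\<^esub> d)"
          using N1[of "(a, b)" p] ab xo p_def by auto
        from r(3) show ?thesis
        proof
          assume "\<exists>c\<in>carrier G. c \<noteq> \<one>\<^bsub>G\<^esub> \<and> G.ord c = r \<and> c \<otimes>\<^bsub>G\<^esub> a = a \<otimes>\<^bsub>G\<^esub> c"
          then obtain c where c: "c \<in> carrier G" "G.ord c = r" "c \<otimes>\<^bsub>G\<^esub> a = a \<otimes>\<^bsub>G\<^esub> c" by blast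
          have "cyc_adj (G \<times>\<times> H) (a, \<one>\<^bsub>H\<^esub>) (c, \<one>\<^bsub>H\<^esub>)"
            using adjGG[OF ab(1) c(1) ab(3)] c r p_def by auto
          moreover have "cyc_adj (G \<times>\<times> H) (c, \<one>\<^bsub>H\<^esub>) (\<one>\<^bsub>G\<^esub>, b)"
            using adjGH[OF c(1) ab(2)] c r p_def True ab by auto
          ultimately show ?thesis by (meson converse_rtranclp_into_rtranclp r_into_rtranclp)
        next
          assume "\<exists>d\<in>carrier H. d \<noteq> \<one>\<^bsub>H\<^esub> \<and> H.ord d = r \<and> d \<otimes>\<^bsub>H\<^esub> b = b \<otimes>\<^bsub>H\<^esub> d"
          then obtain d where d: "d \<in> carrier H" "H.ord d = r" "d \<otimes>\<^bsub>H\<^esub> b = b \<otimes>\<^bsub>H\<^esub> d" by blast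
          have "cyc_adj (G \<times>\<times> H) (a, \<one>\<^bsub>H\<^esub>) (\<one>\<^bsub>G\<^esub>, d)"
            using adjGH[OF ab(1) d(1) ab(3)] d r p_def by auto
          moreover have "cyc_adj (G \<times>\<times> H) (\<one>\<^bsub>G\<^esub>, d) (\<one>\<^bsub>G\<^esub>, b)"
            using adjHH[OF d(1) ab(2)] d r p_def True ab by auto
          ultimately show ?thesis by (meson converse_rtranclp_into_rtranclp r_into_rtranclp)
        qed
      qed
      obtain g0 where g0: "g0 \<in> carrier G" "Factorial_Ring.prime (G.ord g0)"
        using G.prime_power_elem[OF assms(3) g1] by blast
      obtain h0 where h0: "h0 \<in> carrier H" "Factorial_Ring.prime (H.ord h0)"
        using H.prime_power_elem[OF assms(4) h1] by blast
      have V: "?R v (g0, \<one>\<^bsub>H\<^esub>)" if v: "v \<in> cyc_vertices (G \<times>\<times> H)" for v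
      proof -
        obtain x where x: "x \<in> carrier (G \<times>\<times> H)" "Factorial_Ring.prime (M.ord x)" "?R v x"
          using M.prime_power_elem[OF finM] v unfolding cyc_vertices_def by blast
        have x1: "x \<noteq> \<one>\<^bsub>G \<times>\<times> H\<^esub>" using x(2) by (metis M.ord_id not_prime_1)
        obtain g h where gh: "x = (g, h)" by (cases x)
        have ghc: "g \<in> carrier G" "h \<in> carrier H" using x(1) gh by auto
        obtain r where r: "Factorial_Ring.prime r" "r \<noteq> M.ord x"
          "(\<exists>c\<in>carrier G. c \<noteq> \<one>\<^bsub>G\<^esub> \<and> G.ord c = r \<and> c \<otimes>\<^bsub>G\<^esub> g = g \<otimes>\<^bsub>G\<^esub> c)
         \<or> (\<exists>d\<in>carrier H. d \<noteq> \<one>\<^bsub>H\<^esub> \<and> H.ord d = r \<and> d \<otimes>\<^bsub>H\<^esub> h = h \<otimes>\<^bsub>H\<^esub> d)"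
          using N1[OF x(1) refl x(2)] gh by auto
        from r(3) show ?thesis
        proof
          assume "\<exists>c\<in>carrier G. c \<noteq> \<one>\<^bsub>G\<^esub> \<and> G.ord c = r \<and> c \<otimes>\<^bsub>G\<^esub> g = g \<otimes>\<^bsub>G\<^esub> c"
          then obtain c where c: "c \<in> carrier G" "c \<noteq> \<one>\<^bsub>G\<^esub>" "G.ord c = r" "c \<otimes>\<^bsub>G\<^esub> g = g \<otimes>\<^bsub>G\<^esub> c" by blast
          have "cyc_adj (G \<times>\<times> H) x (c, \<one>\<^bsub>H\<^esub>)"
          proof (rule M.adj_coprime)
            show "coprime (M.ord x) (M.ord (c, \<one>\<^bsub>H\<^esub>))"
              using ord_DirProd_left[OF assms(1,2) c(1)] c(3) primes_coprime[OF x(2) r(1)] r(2) by auto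
            show "x \<otimes>\<^bsub>G \<times>\<times> H\<^esub> (c, \<one>\<^bsub>H\<^esub>) = (c, \<one>\<^bsub>H\<^esub>) \<otimes>\<^bsub>G \<times>\<times> H\<^esub> x"
              using gh ghc c by simp
          qed (use x1 x c in auto)
          then have "?R v (c, \<one>\<^bsub>H\<^esub>)" using x(3) by auto
          moreover have "?R (c, \<one>\<^bsub>H\<^esub>) (\<one>\<^bsub>G\<^esub>, h0)" using K[OF c(1) h0(1) _ h0(2)] c r by simp
          moreover have "?R (\<one>\<^bsub>G\<^esub>, h0) (g0, \<one>\<^bsub>H\<^esub>)" using Rsym K[OF g0(1) h0(1) g0(2) h0(2)] by blast
          ultimately show ?thesis by auto
        next
          assume "\<exists>d\<in>carrier H. d \<noteq> \<one>\<^bsub>H\<^esub> \<and> H.ord d = r \<and> d \<otimes>\<^bsub>H\<^esub> h = h \<otimes>\<^bsub>H\<^esub> d"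
          then obtain d where d: "d \<in> carrier H" "d \<noteq> \<one>\<^bsub>H\<^esub>" "H.ord d = r" "d \<otimes>\<^bsub>H\<^esub> h = h \<otimes>\<^bsub>H\<^esub> d" by blast
          have "cyc_adj (G \<times>\<times> H) x (\<one>\<^bsub>G\<^esub>, d)"
          proof (rule M.adj_coprime)
            show "coprime (M.ord x) (M.ord (\<one>\<^bsub>G\<^esub>, d))"
              using ord_DirProd_right[OF assms(1,2) d(1)] d(3) primes_coprime[OF x(2) r(1)] r(2) by auto
            show "x \<otimes>\<^bsub>G \<times>\<times> H\<^esub> (\<one>\<^bsub>G\<^esub>, d) = (\<one>\<^bsub>G\<^esub>, d) \<otimes>\<^bsub>G \<times>\<times> H\<^esub> x"
              using gh ghc d by simp
          qed (use x1 x d in auto)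
          then have "?R v (\<one>\<^bsub>G\<^esub>, d)" using x(3) by auto
          moreover have "?R (\<one>\<^bsub>G\<^esub>, d) (g0, \<one>\<^bsub>H\<^esub>)" using Rsym K[OF g0(1) d(1) g0(2)] d r by simp
          ultimately show ?thesis by auto
        qed
      qed
      have "cyc_graph_connected (G \<times>\<times> H)"
        unfolding cyc_graph_connected_def
      proof (intro ballI)
        fix v w assume "v \<in> cyc_vertices (G \<times>\<times> H)" "w \<in> cyc_vertices (G \<times>\<times> H)"
        then show "?R v w" using V Rsym by (meson rtranclp_trans)
      qed
      then show False using nc by simp
    qed
  next
    assume "\<exists>p x. Factorial_Ring.prime (p::nat) \<and> x \<in> carrier (G \<times>\<times> H) \<and> group.ord (G \<times>\<times> H) x = p
       \<and> is_p_group p (centralizer_of (G \<times>\<times> H) x)"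
    then obtain p x where px: "Factorial_Ring.prime (p::nat)" "x \<in> carrier (G \<times>\<times> H)" "M.ord x = p"
       "is_p_group p (centralizer_of (G \<times>\<times> H) x)" by blast
    have x1: "x \<noteq> \<one>\<^bsub>G \<times>\<times> H\<^esub>" using px by (metis M.ord_id not_prime_1)
    obtain g h where gh: "x = (g, h)" by (cases x)
    have xv: "x \<in> cyc_vertices (G \<times>\<times> H)" using px(2) x1 unfolding cyc_vertices_def by auto
    have comp: "x \<in> generate (G \<times>\<times> H) {w}" if "?R x w" for w
      using M.component_in_S[OF finM px(2,3,1,4) that] by blast
    show "\<not> cyc_graph_connected (G \<times>\<times> H)"
    proof (cases "g = \<one>\<^bsub>G\<^esub>")
      case False
      define w where "w = (\<one>\<^bsub>G\<^esub>, h1)"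
      have wv: "w \<in> cyc_vertices (G \<times>\<times> H)" using h1 unfolding w_def cyc_vertices_def by auto
      have sub: "subgroup ({\<one>\<^bsub>G\<^esub>} \<times> carrier H) (G \<times>\<times> H)"
        by (rule DirProd_subgroups[OF assms(1) G.triv_subgroup assms(2) H.subgroup_self])
      have "generate (G \<times>\<times> H) {w} \<subseteq> {\<one>\<^bsub>G\<^esub>} \<times> carrier H"
        by (rule M.generate_subgroup_incl[OF _ sub]) (use h1 w_def in auto)
      then have "\<not> ?R x w" using comp gh False by blast
      then show ?thesis using xv wv unfolding cyc_graph_connected_def by blast
    next
      case True
      define w where "w = (g1, \<one>\<^bsub>H\<^esub>)"
      have wv: "w \<in> cyc_vertices (G \<times>\<times> H)" using g1 unfolding w_def cyc_vertices_def by auto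
      have sub: "subgroup (carrier G \<times> {\<one>\<^bsub>H\<^esub>}) (G \<times>\<times> H)"
        by (rule DirProd_subgroups[OF assms(1) G.subgroup_self assms(2) H.triv_subgroup])
      have "generate (G \<times>\<times> H) {w} \<subseteq> carrier G \<times> {\<one>\<^bsub>H\<^esub>}"
        by (rule M.generate_subgroup_incl[OF _ sub]) (use g1 w_def in auto)
      moreover have "h \<noteq> \<one>\<^bsub>H\<^esub>" using x1 gh True by auto
      ultimately have "\<not> ?R x w" using comp gh by blast
      then show ?thesis using xv wv unfolding cyc_graph_connected_def by blast
    qed
  qed
qed

end
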